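(* Let $m\ge0$ be an integer. For $i\ge1$ put $\gamma_i=u-(1-zt)(1-t)^{i-1}(u-1)$. Then, as formal power series in $u,z,t$, $$\sum_{k\ge0}\frac{(u-1)^{m+1}(1-zt)^{m+1}u^k(1-t)^{k(m+1)}}{\prod_{i=1}^{k+1}\gamma_i}=-\sum_{j=0}^m(u-1)^j(1-zt)^ju^{m-j}\prod_{i=j+1}^m\bigl(1-(1-t)^i\bigr).$$
   Context: Each $\gamma_i$ has constant term $1$, so the quotients are formal power series over $\mathbb{Q}$, and the $k$-th summand is divisible by $u^k$, so the sum converges formally. An empty product equals $1$. *)

theory Defs
  imports "HOL-Computational_Algebra.Formal_Power_Series"
begin

text \<open>Formal power series in u, z, t over the rationals, realised as nested
  power series: u is the outermost variable, then z, then t.  The topology used for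
  the infinite sum is the u-adic topology of the outer fps type; since the k-th
  summand is divisible by u^k this is the formal convergence of the paper.\<close>

type_synonym fps3 = "rat fps fps fps"

definition U :: fps3 where "U = fps_X"
definition Z :: fps3 where "Z = fps_const fps_X"
definition T :: fps3 where "T = fps_const (fps_const fps_X)"

definition gam :: "nat \<Rightarrow> fps3" where
  "gam i = U - (1 - Z * T) * (1 - T) ^ (i - 1) * (U - 1)"

end

theory Submission
  imports Defs
begin

unbundle fps_syntax

lemma G_eq:
  fixes u b q :: "'a::comm_ring_1"
  shows "(\<Sum>j=0..Suc m. b^j * u^(Suc m - j) * (\<Prod>i=j+1..Suc m. 1 - q^i))
       = u*(1-q^(Suc m)) * (\<Sum>j=0..m. b^j*u^(m-j)*(\<Prod>i=j+1..m. 1-q^i)) + b^(Suc m)"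
proof -
  have "(\<Sum>j=0..Suc m. b^j * u^(Suc m - j) * (\<Prod>i=j+1..Suc m. 1 - q^i))
      = (\<Sum>j=0..m. b^j * u^(Suc m - j) * (\<Prod>i=j+1..Suc m. 1 - q^i)) + b^(Suc m)"
    by (simp add: sum.atLeast0_atMost_Suc)
  also have "(\<Sum>j=0..m. b^j * u^(Suc m - j) * (\<Prod>i=j+1..Suc m. 1 - q^i))
      = (\<Sum>j=0..m. u*(1-q^(Suc m)) * (b^j*u^(m-j)*(\<Prod>i=j+1..m. 1-q^i)))"
  proof (rule sum.cong[OF refl])
    fix j assume "j \<in> {0..m}"
    then have j: "j \<le> m" by simp
    have e1: "u^(Suc m - j) = u * u^(m-j)" using j by (simp add: Suc_diff_le)
    have e2: "(\<Prod>i=j+1..Suc m. 1 - q^i) = (1 - q^(Suc m)) * (\<Prod>i=j+1..m. 1-q^i)"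
    proof -
      have jj: "j+1 \<le> Suc m" using j by simp
      show ?thesis by (rule prod.nat_ivl_Suc'[OF jj])
    qed
    show "b^j * u^(Suc m - j) * (\<Prod>i=j+1..Suc m. 1 - q^i)
        = u*(1-q^(Suc m)) * (b^j*u^(m-j)*(\<Prod>i=j+1..m. 1-q^i))"
      unfolding e1 e2 by (simp only: mult_ac)
  qed
  finally show ?thesis by (simp add: sum_distrib_left)
qed

lemma key:
  fixes u b q :: "'a::comm_ring_1"
  shows "u * (\<Sum>j=0..m. (b*q)^j * u^(m-j) * (\<Prod>i=j+1..m. 1-q^i))
       - (u - b) * (\<Sum>j=0..m. b^j*u^(m-j)*(\<Prod>i=j+1..m. 1-q^i)) = b^(Suc m)"
proof (induction m)
  case 0
  then show ?case by (simp add: algebra_simps)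
next
  case (Suc m)
  show ?case
  proof -
    let ?S1 = "(\<Sum>j=0..m. (b*q)^j * u^(m-j) * (\<Prod>i=j+1..m. 1-q^i))"
    let ?S0 = "(\<Sum>j=0..m. b^j*u^(m-j)*(\<Prod>i=j+1..m. 1-q^i))"
    let ?c = "u*(1-q^(Suc m))"
    have "u * (?c * ?S1 + (b*q)^Suc m) - (u - b) * (?c * ?S0 + b^Suc m)
        = ?c * (u * ?S1 - (u-b) * ?S0) + u * (b*q)^Suc m - (u-b) * b^Suc m"
      by (simp add: algebra_simps)
    also have "\<dots> = b ^ Suc (Suc m)" unfolding Suc.IH
      by (simp add: algebra_simps power_mult_distrib)
    finally show ?thesis
      unfolding G_eq[where b=b and u=u and q=q and m=m] G_eq[where b="b*q" and u=u and q=q and m=m] .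
  qed
qed

lemma inv_right:
  fixes f :: "'a::{comm_ring_1,inverse} fps"
  assumes "f $ 0 * inverse (f $ 0) = 1"
  shows "f * inverse f = 1"
  using fps_right_inverse[OF assms] by (simp add: fps_inverse_def)

lemma inv3:
  fixes f :: fps3
  assumes "f $ 0 $ 0 $ 0 \<noteq> 0"
  shows "f * inverse f = 1"
proof -
  have "f $ 0 $ 0 * inverse (f $ 0 $ 0) = 1" using assms
    by (simp add: inverse_mult_eq_1')
  then have "f $ 0 * inverse (f $ 0) = 1" by (rule inv_right)
  then show ?thesis by (rule inv_right)
qed

lemma prod_nth0: "(prod (f :: nat \<Rightarrow> 'a::comm_ring_1 fps) A) $ 0 = prod (\<lambda>i. f i $ 0) A"
  by (induction A rule: infinite_finite_induct) auto

lemma gam0: "gam i $ 0 $ 0 $ 0 = 1"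
  by (simp add: gam_def U_def Z_def T_def fps_power_zeroth)

definition PP :: "nat \<Rightarrow> fps3" where "PP n = (\<Prod>i = 1..n. gam i)"

lemma PP0: "PP n $ 0 $ 0 $ 0 = 1"
  unfolding PP_def prod_nth0 by (simp add: gam0)

lemma PP_inv: "PP n * inverse (PP n) = 1"
  by (rule inv3) (simp add: PP0)

lemma PP_Suc: "PP (Suc n) = PP n * gam (Suc n)"
  unfolding PP_def by (simp add: prod.nat_ivl_Suc' mult.commute)

lemma inv_step: "inverse (PP n) = gam (Suc n) * inverse (PP (Suc n))"
proof -
  have "inverse (PP n) = inverse (PP n) * (PP (Suc n) * inverse (PP (Suc n)))"
    by (simp add: PP_inv)
  also have "\<dots> = (PP n * inverse (PP n)) * gam (Suc n) * inverse (PP (Suc n))"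
    by (simp add: PP_Suc algebra_simps)
  finally show ?thesis by (simp add: PP_inv)
qed

lemma ring_aux:
  fixes x i h1 h0 g :: "'a::comm_ring_1"
  shows "x^Suc n * i * h1 - x^n*(g*i)*h0 = x^n*i*(x*h1 - g*h0)"
  by (simp add: algebra_simps)

lemma ring_aux2:
  fixes a b c :: "'a::ab_group_add"
  shows "a - b + (c - a) = c - b"
  by (simp add: algebra_simps)

theorem lemma7:
  fixes m :: nat
  shows "(\<lambda>k. (U - 1) ^ (m + 1) * (1 - Z * T) ^ (m + 1) * U ^ k * (1 - T) ^ (k * (m + 1))
              * inverse (\<Prod>i = 1..k + 1. gam i))
         sums (- (\<Sum>j = 0..m. (U - 1) ^ j * (1 - Z * T) ^ j * U ^ (m - j)
                               * (\<Prod>i = j + 1..m. 1 - (1 - T) ^ i)))"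
proof -
  define q where "q = 1 - T"
  define a where "a = (U - 1) * (1 - Z * T)"
  define H where "H n = (\<Sum>j=0..m. (a*q^n)^j * U^(m-j) * (\<Prod>i=j+1..m. 1-q^i))" for n
  define f where "f k = (U - 1) ^ (m + 1) * (1 - Z * T) ^ (m + 1) * U ^ k * (1 - T) ^ (k * (m + 1))
              * inverse (\<Prod>i = 1..k + 1. gam i)" for k
  have gamq: "gam (Suc n) = U - a * q^n" for n
    by (simp add: gam_def a_def q_def algebra_simps)
  have fq: "f k = U^k * (a * q^k)^Suc m * inverse (PP (Suc k))" for k
  proof -
    have "(a*q^k)^Suc m = (U - 1) ^ (m + 1) * (1 - Z * T) ^ (m + 1) * (1-T)^(k*(m+1))"
      unfolding a_def q_def power_mult_distrib power_mult Suc_eq_plus1 ..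
    then show ?thesis unfolding f_def PP_def Suc_eq_plus1 by (simp only: mult_ac)
  qed
  have step: "f n = U^Suc n * inverse (PP (Suc n)) * H (Suc n) - U^n * inverse (PP n) * H n" for n
  proof -
    have k: "U * H (Suc n) - (U - a*q^n) * H n = (a*q^n)^Suc m"
      using key[where u=U and b="a*q^n" and q=q and m=m]
      unfolding H_def power_Suc2[of q n] mult.assoc .
    have "U^Suc n * inverse (PP (Suc n)) * H (Suc n) - U^n * inverse (PP n) * H n
       = U^n * inverse (PP (Suc n)) * (U * H (Suc n) - gam (Suc n) * H n)"
      by (subst inv_step[of n]) (rule ring_aux)
    also have "\<dots> = f n" unfolding gamq k fq by (simp only: mult_ac)
    finally show ?thesis by simp
  qed
  have ps: "(\<Sum>k<n. f k) = U^n * inverse (PP n) * H n - H 0" for n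
  proof (induction n)
    case 0
    have "PP 0 = 1" by (simp add: PP_def)
    then have "inverse (PP 0) = 1" using PP_inv[of 0] by simp
    then show ?case by simp
  next
    case (Suc n)
    show ?case unfolding sum.lessThan_Suc Suc.IH step[of n] by (rule ring_aux2)
  qed
  have H0: "H 0 = (\<Sum>j = 0..m. (U - 1) ^ j * (1 - Z * T) ^ j * U ^ (m - j)
                               * (\<Prod>i = j + 1..m. 1 - (1 - T) ^ i))"
    by (simp add: H_def a_def q_def power_mult_distrib)
  have "(\<lambda>n. \<Sum>k<n. f k) \<longlonglongrightarrow> - H 0"
  proof (rule tendsto_fpsI)
    fix k
    show "\<forall>\<^sub>F n in sequentially. (\<Sum>k<n. f k) $ k = (- H 0) $ k"
      using eventually_gt_at_top[of k]
    proof eventually_elim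
      case (elim n)
      have "(U^n * (inverse (PP n) * H n)) $ k = 0"
        unfolding U_def fps_X_power_mult_nth using elim by simp
      then show ?case unfolding ps by (simp add: mult.assoc)
    qed
  qed
  then show ?thesis unfolding sums_def f_def[symmetric] H0 by simp
qed

end
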